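(* Let $(X,d)$ be a compact metric space whose open balls are connected and let $\lambda\in(0,1)$. Let $U\subset\mathbb{R}^M$ be a set of positive Lebesgue measure and let $\{f_\mu\}_{\mu\in U}$ be a family of piecewise $\lambda$-contractions on $X$ which satisfies Hypothesis (E) and Hypothesis (T) at some $\mu^*\in U$. Then there exists $\delta>0$ such that for Lebesgue almost every $\mu\in U\cap B_\delta(\mu^* )$ the map $f_\mu$ is asymptotically periodic on $Z_\mu$, the set of regular points of $f_\mu$.
   Context: A map $f\colon X\to X$ is a piecewise $\lambda$-contraction if there exist $N\in\mathbb{N}$, open, connected, pairwise disjoint sets $A_1,\dots,A_N\subset X$ whose union $X'$ is dense in $X$, and bi-Lipschitz maps $\varphi_1,\dots,\varphi_N\colon X\to X$ with Lipschitz constants $\le\lambda$ such that $f|_{A_i}=\varphi_i|_{A_i}$ for each $i$. $\mathcal{A}=\{1,\dots,N\}$ is the label set, $\{A_i\}$ the partition, $\{\varphi_i\}$ the associated iterated function system, and $S(f)=X\setminus X'$ the singular set. A point $x$ is regular of order $n$ if $f^j(x)\notin S(f)$ for $0\le j<n$, and regular if this holds for all $n$; $Z(f)$ is the set of regular points. For $x$ regular of order $n$, its itinerary of order $n$ is $(i_0,\dots,i_{n-1})\in\mathcal{A}^n$ with $f^j(x)\in A_{i_j}$; $\mathcal{I}_n(f)$ denotes the set of all itineraries of order $n$. For $Y\subset X$ forward invariant, $\omega(f,Y)=\bigcup_{x\in Y}\omega(f,x)$, where $\omega(f,x)=\bigcap_{m\ge1}\overline{\bigcup_{n\ge m}\{f^n(x)\}}$;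 $f$ is asymptotically periodic on $Y$ if $\omega(f,Y)$ is a union of finitely many periodic orbits. A family of piecewise $\lambda$-contractions $\{f_\mu\}_{\mu\in U}$ means: there is $N$ such that each $f_\mu$ is a piecewise $\lambda$-contraction on $X$ with label set $\mathcal{A}=\{1,\dots,N\}$, with partition $\{A_{i,\mu}\}$ and IFS $\{\varphi_{i,\mu}\}$. Write $S_\mu=S(f_\mu)$, $Z_\mu=Z(f_\mu)$, and for $\alpha=(i_0,\dots,i_{n-1})\in\mathcal{A}^n$, $\varphi^\alpha_\mu=\varphi_{i_{n-1},\mu}\circ\cdots\circ\varphi_{i_0,\mu}$. For $\delta>0$ let $U_\delta(\mu^* )=U\cap B_\delta(\mu^* )$ ($B_\delta$ the open Euclidean ball) and $\mathcal{J}^\delta_n(\mu^* )=\bigcup_{\mu\in U_\delta(\mu^* )}\mathcal{I}_n(f_\mu)$. Hypothesis (E) at $\mu^*$: $\lim_{\delta\to0^+}\limsup_{n\to\infty}\frac1n\log\#\mathcal{J}_n^\delta(\mu^* )=0$. Hypothesis (T) at $\mu^*$: there exist $x_0\in X$, $\varepsilon_0>0$, $\delta_0>0$, $n_0\ge1$, $a>0$, $c>0$ such that for all $0<\varepsilon<\varepsilon_0$, $n\ge n_0$ and $\alpha\in\mathcal{J}^{\delta_0}_n(\mu^* )$, $\mathrm{Leb}^*(\{\mu\in U_{\delta_0}(\mu^* ): d(\varphi^\alpha_\mu(x_0),S_\mu)\le\varepsilon\})\le c\,\varepsilon^a$, where $\mathrm{Leb}^*$ is Lebesgue outer measure and $d(x,S)=\inf_{s\in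 S}d(x,s)$. *)

theory Defs
  imports "HOL-Analysis.Analysis"
begin

definition bi_lipschitz_le :: "'a::metric_space set \<Rightarrow> real \<Rightarrow> ('a \<Rightarrow> 'a) \<Rightarrow> bool" where
  "bi_lipschitz_le X lam g \<longleftrightarrow>
     g ` X \<subseteq> X \<and>
     (\<exists>c>0. \<forall>x\<in>X. \<forall>y\<in>X. c * dist x y \<le> dist (g x) (g y) \<and> dist (g x) (g y) \<le> lam * dist x y)"

definition pw_contraction ::
  "'a::metric_space set \<Rightarrow> real \<Rightarrow> nat \<Rightarrow> ('a \<Rightarrow> 'a) \<Rightarrow> (nat \<Rightarrow> 'a set) \<Rightarrow> (nat \<Rightarrow> 'a \<Rightarrow> 'a) \<Rightarrow> bool" where
  "pw_contraction X lam N f A phi \<longleftrightarrow>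
     f ` X \<subseteq> X \<and>
     (\<forall>i\<in>{1..N}. openin (top_of_set X) (A i) \<and> connected (A i)) \<and>
     (\<forall>i\<in>{1..N}. \<forall>j\<in>{1..N}. i \<noteq> j \<longrightarrow> A i \<inter> A j = {}) \<and>
     X \<subseteq> closure (\<Union>i\<in>{1..N}. A i) \<and>
     (\<forall>i\<in>{1..N}. bi_lipschitz_le X lam (phi i)) \<and>
     (\<forall>i\<in>{1..N}. \<forall>x\<in>A i. f x = phi i x)"

definition singular_set :: "'a set \<Rightarrow> nat \<Rightarrow> (nat \<Rightarrow> 'a set) \<Rightarrow> 'a set" where
  "singular_set X N A = X - (\<Union>i\<in>{1..N}. A i)"

definition regular_order :: "'a set \<Rightarrow> ('a \<Rightarrow> 'a) \<Rightarrow> 'a set \<Rightarrow> nat \<Rightarrow> 'a \<Rightarrow> bool" where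
  "regular_order X f S n x \<longleftrightarrow> x \<in> X \<and> (\<forall>j<n. (f ^^ j) x \<notin> S)"

definition regular_points :: "'a set \<Rightarrow> ('a \<Rightarrow> 'a) \<Rightarrow> 'a set \<Rightarrow> 'a set" where
  "regular_points X f S = {x \<in> X. \<forall>n. regular_order X f S n x}"

definition itineraries :: "'a set \<Rightarrow> nat \<Rightarrow> ('a \<Rightarrow> 'a) \<Rightarrow> (nat \<Rightarrow> 'a set) \<Rightarrow> nat \<Rightarrow> nat list set" where
  "itineraries X N f A n =
     {\<alpha>. length \<alpha> = n \<and> (\<exists>x. regular_order X f (singular_set X N A) n x \<and>
          (\<forall>j<n. \<alpha> ! j \<in> {1..N} \<and> (f ^^ j) x \<in> A (\<alpha> ! j)))}"

text \<open>phi^alpha = phi_{i_{n-1}} o ... o phi_{i_0}.\<close>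
definition ifs_comp :: "(nat \<Rightarrow> 'a \<Rightarrow> 'a) \<Rightarrow> nat list \<Rightarrow> 'a \<Rightarrow> 'a" where
  "ifs_comp phi \<alpha> x = fold (\<lambda>i y. phi i y) \<alpha> x"

definition omega_limit :: "('a::topological_space \<Rightarrow> 'a) \<Rightarrow> 'a \<Rightarrow> 'a set" where
  "omega_limit f x = (\<Inter>m\<in>{1..}. closure {(f ^^ n) x | n. n \<ge> m})"

definition periodic_orbit :: "'a set \<Rightarrow> ('a \<Rightarrow> 'a) \<Rightarrow> 'a set \<Rightarrow> bool" where
  "periodic_orbit X f P \<longleftrightarrow> (\<exists>p\<in>X. \<exists>q\<ge>1. (f ^^ q) p = p \<and> P = {(f ^^ k) p | k. True})"

definition asymptotically_periodic :: "'a::topological_space set \<Rightarrow> ('a \<Rightarrow> 'a) \<Rightarrow> 'a set \<Rightarrow> bool" where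
  "asymptotically_periodic X f Y \<longleftrightarrow>
     (\<exists>F. finite F \<and> (\<forall>P\<in>F. periodic_orbit X f P) \<and> (\<Union>x\<in>Y. omega_limit f x) = \<Union>F)"

definition J_set :: "'a set \<Rightarrow> nat \<Rightarrow> 'm::metric_space set \<Rightarrow> ('m \<Rightarrow> 'a \<Rightarrow> 'a) \<Rightarrow> ('m \<Rightarrow> nat \<Rightarrow> 'a set)
      \<Rightarrow> 'm \<Rightarrow> real \<Rightarrow> nat \<Rightarrow> nat list set" where
  "J_set X N U f A \<mu>s \<delta> n = (\<Union>\<mu>\<in>U \<inter> ball \<mu>s \<delta>. itineraries X N (f \<mu>) (A \<mu>) n)"

text \<open>(1/n) log #J, with log 0 = -infinity (extended reals).\<close>
definition log_growth :: "nat \<Rightarrow> nat \<Rightarrow> ereal" where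
  "log_growth k n = (if k = 0 then -\<infinity> else ereal (ln (real k) / real n))"

definition hypothesis_E :: "'a set \<Rightarrow> nat \<Rightarrow> 'm::metric_space set \<Rightarrow> ('m \<Rightarrow> 'a \<Rightarrow> 'a) \<Rightarrow> ('m \<Rightarrow> nat \<Rightarrow> 'a set)
      \<Rightarrow> 'm \<Rightarrow> bool" where
  "hypothesis_E X N U f A \<mu>s \<longleftrightarrow>
     ((\<lambda>\<delta>. limsup (\<lambda>n. log_growth (card (J_set X N U f A \<mu>s \<delta> n)) n)) \<longlongrightarrow> 0) (at_right 0)"

text \<open>d(x,S) = inf over S, with inf of the empty set = +infinity: d(x,S) \<le> eps iff
  S is nonempty and infdist x S \<le> eps.\<close>
definition hypothesis_T :: "'a::metric_space set \<Rightarrow> nat \<Rightarrow> 'm::euclidean_space set \<Rightarrow> ('m \<Rightarrow> 'a \<Rightarrow> 'a)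
      \<Rightarrow> ('m \<Rightarrow> nat \<Rightarrow> 'a set) \<Rightarrow> ('m \<Rightarrow> nat \<Rightarrow> 'a \<Rightarrow> 'a) \<Rightarrow> 'm \<Rightarrow> bool" where
  "hypothesis_T X N U f A phi \<mu>s \<longleftrightarrow>
     (\<exists>x0\<in>X. \<exists>\<epsilon>0>0. \<exists>\<delta>0>0. \<exists>n0\<ge>1. \<exists>a>0. \<exists>c>0.
        \<forall>\<epsilon>. 0 < \<epsilon> \<and> \<epsilon> < \<epsilon>0 \<longrightarrow> (\<forall>n\<ge>n0. \<forall>\<alpha>\<in>J_set X N U f A \<mu>s \<delta>0 n.
          outer_measure_of lebesgue
            {\<mu> \<in> U \<inter> ball \<mu>s \<delta>0. singular_set X N (A \<mu>) \<noteq> {} \<and>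
                 infdist (ifs_comp (phi \<mu>) \<alpha> x0) (singular_set X N (A \<mu>)) \<le> \<epsilon>}
          \<le> ennreal (c * \<epsilon> powr a)))"

end

theory Submission
  imports Defs
begin


lemma omega_periodic:
  fixes f :: "'a::metric_space \<Rightarrow> 'a"
  assumes "(f ^^ p) q = q" "p \<ge> 1"
  shows "omega_limit f q = {(f ^^ k) q | k. True}"
proof -
  let ?P = "{(f ^^ k) q | k. True}"
  have mp: "(f ^^ (m * p)) q = q" for m
  proof (induction m)
    case (Suc m)
    have "(f ^^ (Suc m * p)) q = (f ^^ p) ((f ^^ (m * p)) q)"
      by (simp add: funpow_add)
    then show ?case using Suc assms by simp
  qed simp
  have tail: "{(f ^^ n) q | n. n \<ge> m} = ?P" for m
  proof
    show "{(f ^^ n) q | n. n \<ge> m} \<subseteq> ?P" by blast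
    show "?P \<subseteq> {(f ^^ n) q | n. n \<ge> m}"
    proof
      fix y assume "y \<in> ?P"
      then obtain k where y: "y = (f ^^ k) q" by blast
      have "(f ^^ (k + m * p)) q = (f ^^ k) ((f ^^ (m * p)) q)" by (simp add: funpow_add)
      then have "y = (f ^^ (k + m * p)) q" using y mp by simp
      moreover have "k + m * p \<ge> m" using assms(2) by (simp add: trans_le_add2)
      ultimately show "y \<in> {(f ^^ n) q | n. n \<ge> m}" by blast
    qed
  qed
  have fin: "finite ?P"
  proof -
    have "?P \<subseteq> (\<lambda>k. (f ^^ k) q) ` {..<p}"
    proof
      fix y assume "y \<in> ?P"
      then obtain k where y: "y = (f ^^ k) q" by blast
      have "(f ^^ (k mod p + (k div p) * p)) q = (f ^^ (k mod p)) ((f ^^ ((k div p) * p)) q)"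
        by (simp only: funpow_add comp_apply)
      then have "(f ^^ k) q = (f ^^ (k mod p)) ((f ^^ ((k div p) * p)) q)"
        by (simp only: mod_div_mult_eq)
      also have "\<dots> = (f ^^ (k mod p)) q" using mp by simp
      finally show "y \<in> (\<lambda>k. (f ^^ k) q) ` {..<p}" using y assms(2) by auto
    qed
    then show ?thesis by (rule finite_subset) simp
  qed
  then have "closure ?P = ?P" by (simp add: finite_imp_closed)
  then show ?thesis unfolding omega_limit_def using tail by auto
qed

lemma omega_asym:
  fixes f :: "'a::metric_space \<Rightarrow> 'a"
  assumes H: "\<And>e. e > 0 \<Longrightarrow> \<exists>T. \<forall>t\<ge>T. dist ((f ^^ (t + k)) z) ((f ^^ t) z') < e"
  shows "omega_limit f z = omega_limit f z'"
proof
  show "omega_limit f z \<subseteq> omega_limit f z'"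
  proof
    fix y assume y: "y \<in> omega_limit f z"
    show "y \<in> omega_limit f z'" unfolding omega_limit_def
    proof
      fix m :: nat assume m: "m \<in> {1..}"
      show "y \<in> closure {(f ^^ n) z' | n. n \<ge> m}" unfolding closure_approachable
      proof (intro allI impI)
        fix e :: real assume e: "e > 0"
        obtain T where T: "\<forall>t\<ge>T. dist ((f ^^ (t + k)) z) ((f ^^ t) z') < e/2"
          using H[of "e/2"] e by auto
        have "y \<in> closure {(f ^^ n) z | n. n \<ge> m + T + k + 1}"
          using y unfolding omega_limit_def by auto
        then obtain w where w: "w \<in> {(f ^^ n) z | n. n \<ge> m + T + k + 1}" "dist w y < e/2"
          using e unfolding closure_approachable by (meson half_gt_zero)
        then obtain s where s: "w = (f ^^ s) z" "s \<ge> m + T + k + 1" by blast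
        define t where "t = s - k"
        have st: "s = t + k" "t \<ge> T" "t \<ge> m" using s unfolding t_def by auto
        have d1: "dist ((f ^^ (t + k)) z) ((f ^^ t) z') < e/2" using T[rule_format, OF st(2)] .
        have "dist ((f ^^ t) z') y \<le> dist ((f ^^ t) z') w + dist w y" by (rule dist_triangle)
        also have "\<dots> < e" using d1 st w s by (simp add: dist_commute)
        finally show "\<exists>y'\<in>{(f ^^ n) z' | n. n \<ge> m}. dist y' y < e" using st by blast
      qed
    qed
  qed
  show "omega_limit f z' \<subseteq> omega_limit f z"
  proof
    fix y assume y: "y \<in> omega_limit f z'"
    show "y \<in> omega_limit f z" unfolding omega_limit_def
    proof
      fix m :: nat assume m: "m \<in> {1..}"
      show "y \<in> closure {(f ^^ n) z | n. n \<ge> m}" unfolding closure_approachable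
      proof (intro allI impI)
        fix e :: real assume e: "e > 0"
        obtain T where T: "\<forall>t\<ge>T. dist ((f ^^ (t + k)) z) ((f ^^ t) z') < e/2"
          using H[of "e/2"] e by auto
        have "y \<in> closure {(f ^^ n) z' | n. n \<ge> m + T + 1}"
          using y unfolding omega_limit_def by auto
        then obtain w where w: "w \<in> {(f ^^ n) z' | n. n \<ge> m + T + 1}" "dist w y < e/2"
          using e unfolding closure_approachable by (meson half_gt_zero)
        then obtain s where s: "w = (f ^^ s) z'" "s \<ge> m + T + 1" by blast
        have d1: "dist ((f ^^ (s + k)) z) w < e/2" using T[rule_format, of s] s by simp
        have "dist ((f ^^ (s + k)) z) y \<le> dist ((f ^^ (s + k)) z) w + dist w y" by (rule dist_triangle)
        also have "\<dots> < e" using d1 w by simp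
        finally show "\<exists>y'\<in>{(f ^^ n) z | n. n \<ge> m}. dist y' y < e" using s
          by (intro bexI[of _ "(f ^^ (s + k)) z"]) auto
      qed
    qed
  qed
qed

lemma conn_in_one:
  assumes "connected C" "C \<subseteq> X" "C \<subseteq> (\<Union>i\<in>I. A i)"
    and op: "\<forall>i\<in>I. openin (top_of_set X) (A i)"
    and dj: "\<forall>i\<in>I. \<forall>j\<in>I. i \<noteq> j \<longrightarrow> A i \<inter> A j = {}"
    and "i0 \<in> I" "z \<in> C" "z \<in> A i0"
  shows "C \<subseteq> A i0"
proof (rule ccontr)
  assume nc: "\<not> C \<subseteq> A i0"
  have oC: "openin (top_of_set C) (C \<inter> B)" if hB: "openin (top_of_set X) B" for B
  proof -
    obtain T where "open T" "B = X \<inter> T" using hB openin_open[of X B] by auto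
    then have "C \<inter> B = C \<inter> T" using assms(2) by auto
    then show ?thesis using \<open>open T\<close> openin_open_Int by metis
  qed
  have o1: "openin (top_of_set X) (A i0)" using op assms(6) by auto
  have o2: "openin (top_of_set X) (\<Union>i\<in>I-{i0}. A i)" using op by (intro openin_Union) auto
  have "\<exists>E1 E2. openin (top_of_set C) E1 \<and> openin (top_of_set C) E2 \<and>
                 C \<subseteq> E1 \<union> E2 \<and> E1 \<inter> E2 = {} \<and> E1 \<noteq> {} \<and> E2 \<noteq> {}"
  proof (intro exI conjI)
    show "openin (top_of_set C) (C \<inter> A i0)" using oC o1 by blast
    show "openin (top_of_set C) (C \<inter> (\<Union>i\<in>I-{i0}. A i))" using oC o2 by blast
    show "C \<subseteq> C \<inter> A i0 \<union> C \<inter> (\<Union>i\<in>I-{i0}. A i)" using assms(3) by blast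
    show "C \<inter> A i0 \<inter> (C \<inter> (\<Union>i\<in>I-{i0}. A i)) = {}" using dj assms(6) by blast
    show "C \<inter> A i0 \<noteq> {}" using assms(7,8) by blast
    show "C \<inter> (\<Union>i\<in>I-{i0}. A i) \<noteq> {}" using nc assms(3) by blast
  qed
  then show False using assms(1) connected_openin by blast
qed



context
  fixes X :: "'a::metric_space set" and lam :: real and N :: nat
    and f :: "'a \<Rightarrow> 'a" and A :: "nat \<Rightarrow> 'a set" and phi :: "nat \<Rightarrow> 'a \<Rightarrow> 'a"
  assumes pw: "pw_contraction X lam N f A phi" and lam0: "0 < lam"
begin

lemma A_sub: "i \<in> {1..N} \<Longrightarrow> A i \<subseteq> X"
  using pw unfolding pw_contraction_def by (meson openin_imp_subset)

lemma A_open: "i \<in> {1..N} \<Longrightarrow> openin (top_of_set X) (A i)"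
  using pw unfolding pw_contraction_def by blast

lemma A_disj: "i \<in> {1..N} \<Longrightarrow> j \<in> {1..N} \<Longrightarrow> i \<noteq> j \<Longrightarrow> A i \<inter> A j = {}"
  using pw unfolding pw_contraction_def by blast

lemma phi_X: "i \<in> {1..N} \<Longrightarrow> x \<in> X \<Longrightarrow> phi i x \<in> X"
  using pw unfolding pw_contraction_def bi_lipschitz_le_def by blast

lemma phi_lip: "i \<in> {1..N} \<Longrightarrow> x \<in> X \<Longrightarrow> y \<in> X \<Longrightarrow> dist (phi i x) (phi i y) \<le> lam * dist x y"
  using pw unfolding pw_contraction_def bi_lipschitz_le_def by blast

lemma f_X: "x \<in> X \<Longrightarrow> f x \<in> X"
  using pw unfolding pw_contraction_def by blast

lemma fpow_X: "x \<in> X \<Longrightarrow> (f ^^ k) x \<in> X"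
  by (induction k) (auto simp: f_X)

lemma f_eq: "i \<in> {1..N} \<Longrightarrow> x \<in> A i \<Longrightarrow> f x = phi i x"
  using pw unfolding pw_contraction_def by blast

lemma nonsing: "x \<in> X \<Longrightarrow> x \<notin> singular_set X N A \<Longrightarrow> \<exists>i\<in>{1..N}. x \<in> A i"
  unfolding singular_set_def by blast

lemma A_nonsing: "i \<in> {1..N} \<Longrightarrow> x \<in> A i \<Longrightarrow> x \<notin> singular_set X N A"
  unfolding singular_set_def by blast

lemma ifs_Cons[simp]: "ifs_comp phi (a # \<alpha>) x = ifs_comp phi \<alpha> (phi a x)"
  unfolding ifs_comp_def by simp

lemma ifs_Nil[simp]: "ifs_comp phi [] x = x"
  unfolding ifs_comp_def by simp

lemma ifs_snoc: "ifs_comp phi (\<alpha> @ [a]) x = phi a (ifs_comp phi \<alpha> x)"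
  unfolding ifs_comp_def by simp

lemma ifs_X: "set \<alpha> \<subseteq> {1..N} \<Longrightarrow> x \<in> X \<Longrightarrow> ifs_comp phi \<alpha> x \<in> X"
  by (induction \<alpha> arbitrary: x) (auto simp: phi_X)

lemma ifs_lip: "set \<alpha> \<subseteq> {1..N} \<Longrightarrow> x \<in> X \<Longrightarrow> y \<in> X \<Longrightarrow>
    dist (ifs_comp phi \<alpha> x) (ifs_comp phi \<alpha> y) \<le> lam ^ length \<alpha> * dist x y"
proof (induction \<alpha> arbitrary: x y)
  case Nil then show ?case by simp
next
  case (Cons a \<alpha>)
  have a: "a \<in> {1..N}" using Cons by auto
  have "dist (ifs_comp phi (a # \<alpha>) x) (ifs_comp phi (a # \<alpha>) y)
      \<le> lam ^ length \<alpha> * dist (phi a x) (phi a y)"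
    using Cons a by (simp add: phi_X)
  also have "\<dots> \<le> lam ^ length \<alpha> * (lam * dist x y)"
    using phi_lip[OF a Cons.prems(2,3)] lam0
    by (intro mult_left_mono) auto
  finally show ?case by (simp add: mult_ac)
qed


lemma itin_funpow:
  assumes "x \<in> X" "\<forall>j<length \<alpha>. \<alpha>!j \<in> {1..N} \<and> (f^^j) x \<in> A (\<alpha>!j)" "k \<le> length \<alpha>"
  shows "(f^^k) x = ifs_comp phi (take k \<alpha>) x"
  using assms(3)
proof (induction k)
  case 0 then show ?case by simp
next
  case (Suc k)
  then have k: "k < length \<alpha>" by simp
  have "(f^^Suc k) x = f ((f^^k) x)" by simp
  also have "\<dots> = phi (\<alpha>!k) ((f^^k) x)" using assms(2) k by (intro f_eq) auto
  also have "\<dots> = phi (\<alpha>!k) (ifs_comp phi (take k \<alpha>) x)" using Suc k by simp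
  also have "\<dots> = ifs_comp phi (take (Suc k) \<alpha>) x"
    using k by (simp add: take_Suc_conv_app_nth ifs_snoc)
  finally show ?case .
qed

lemma det:
  assumes cX: "compact X" and conn: "\<forall>x\<in>X. \<forall>r>0. connected (ball x r \<inter> X)" and lam1: "lam < 1"
    and x0: "x0 \<in> X" and n1: "n \<ge> 1"
    and H: "\<forall>\<beta>\<in>itineraries X N f A n. singular_set X N A = {} \<or>
        infdist (ifs_comp phi \<beta> x0) (singular_set X N A) > 2 * lam^n * (diameter X + 1) / (1 - lam)"
  shows "asymptotically_periodic X f (regular_points X f (singular_set X N A))"
proof -
  define S where "S = singular_set X N A"
  define I where "I = itineraries X N f A n"
  define Dm where "Dm = diameter X"
  define r where "r = 2 * lam^n * (Dm + 1) / (1 - lam)"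
  define \<rho> where "\<rho> = lam * r + lam^n * Dm"
  define c where "c \<beta> = ifs_comp phi \<beta> x0" for \<beta>
  define Db where "Db \<beta> = ball (c \<beta>) r \<inter> X" for \<beta>
  define K where "K \<beta> = cball (c \<beta>) \<rho> \<inter> X" for \<beta>
  have bX: "bounded X" using cX compact_imp_bounded by auto
  have dX: "dist x y \<le> Dm" if "x\<in>X" "y\<in>X" for x y
    using diameter_bounded_bound bX Dm_def that by auto
  have Dm0: "Dm \<ge> 0" using dX[OF x0 x0] by simp
  have lamn: "0 < lam^n" using lam0 by simp
  have r0: "r > 0" unfolding r_def using lamn Dm0 lam1 by (intro divide_pos_pos) auto
  have r1: "(1 - lam) * r = 2 * lam^n * (Dm + 1)" unfolding r_def using lam1 by (simp add: field_simps)
  have r2: "r - lam * r = 2 * lam^n * (Dm + 1)" using r1 by (simp add: algebra_simps)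
  have r3: "lam^n * Dm < 2 * lam^n * (Dm + 1)"
  proof -
    have "lam^n * Dm < lam^n * (2 * Dm + 2)" using lamn Dm0 by (intro mult_strict_left_mono) auto
    then show ?thesis by (simp add: algebra_simps)
  qed
  have \<rho>r: "\<rho> < r" unfolding \<rho>_def using r2 r3 by linarith
  have lr0: "lam * r \<ge> 0" using lam0 r0 by simp
  have lnD: "lam^n * Dm < r" using \<rho>r lr0 unfolding \<rho>_def by linarith
  have KD: "K \<beta> \<subseteq> Db \<beta>" for \<beta> using \<rho>r by (auto simp: K_def Db_def)
  have finI: "finite I"
  proof -
    have "I \<subseteq> {xs. set xs \<subseteq> {1..N} \<and> length xs = n}"
      unfolding I_def itineraries_def by (auto simp: set_conv_nth)
    then show ?thesis by (rule finite_subset) (rule finite_lists_length_eq, simp)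
  qed
  have Imem: "length \<beta> = n \<and> set \<beta> \<subseteq> {1..N} \<and> (\<exists>y. regular_order X f S n y \<and>
      (\<forall>j<n. \<beta>!j\<in>{1..N} \<and> (f^^j) y \<in> A (\<beta>!j)))" if "\<beta> \<in> I" for \<beta>
  proof -
    have "length \<beta> = n \<and> (\<exists>y. regular_order X f S n y \<and>
      (\<forall>j<n. \<beta>!j\<in>{1..N} \<and> (f^^j) y \<in> A (\<beta>!j)))"
      using that unfolding I_def itineraries_def S_def by blast
    moreover from this have "set \<beta> \<subseteq> {1..N}" by (auto simp: set_conv_nth)
    ultimately show ?thesis by blast
  qed
  have cX': "c \<beta> \<in> X" if "\<beta> \<in> I" for \<beta>
    using Imem[OF that] ifs_X x0 unfolding c_def by blast
  have cD: "c \<beta> \<in> Db \<beta>" if "\<beta> \<in> I" for \<beta>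
    using cX'[OF that] r0 unfolding Db_def by simp
  have DS: "Db \<beta> \<inter> S = {}" if "\<beta> \<in> I" for \<beta>
  proof (rule ccontr)
    assume "Db \<beta> \<inter> S \<noteq> {}"
    then obtain z where z: "z \<in> Db \<beta>" "z \<in> S" by blast
    then have "infdist (c \<beta>) S \<le> dist (c \<beta>) z" by (intro infdist_le)
    also have "\<dots> < r" using z unfolding Db_def by simp
    finally have "infdist (c \<beta>) S < r" .
    moreover have "S = {} \<or> infdist (c \<beta>) S > r"
      using H that unfolding S_def I_def c_def r_def Dm_def by blast
    ultimately show False using z by auto
  qed
  have claim: "\<exists>\<beta>'\<in>I. (\<forall>z\<in>Db \<beta>. f z \<in> K \<beta>') \<and>
      (\<forall>z\<in>Db \<beta>. \<forall>z'\<in>Db \<beta>. dist (f z) (f z') \<le> lam * dist z z')" if \<beta>: "\<beta> \<in> I" for \<beta>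
  proof -
    obtain y where y: "regular_order X f S n y" "\<forall>j<n. \<beta>!j\<in>{1..N} \<and> (f^^j) y \<in> A (\<beta>!j)"
      and len: "length \<beta> = n" and set\<beta>: "set \<beta> \<subseteq> {1..N}"
      using Imem[OF \<beta>] by blast
    have yX: "y \<in> X" using y(1) unfolding regular_order_def by blast
    have fny: "(f^^n) y = ifs_comp phi \<beta> y"
      using itin_funpow[OF yX, of \<beta> n] y(2) len by simp
    have "dist ((f^^n) y) (c \<beta>) \<le> lam^n * dist y x0"
      unfolding fny c_def using ifs_lip[OF set\<beta> yX x0] len by simp
    also have "\<dots> \<le> lam^n * Dm" using dX[OF yX x0] lamn by (intro mult_left_mono) auto
    finally have fnyD: "(f^^n) y \<in> Db \<beta>"
      using lnD fpow_X[OF yX] unfolding Db_def by (simp add: dist_commute)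
    have DU: "Db \<beta> \<subseteq> (\<Union>i\<in>{1..N}. A i)"
    proof
      fix z assume z: "z \<in> Db \<beta>"
      then have "z \<in> X" "z \<notin> S" using DS[OF \<beta>] unfolding Db_def by auto
      then show "z \<in> (\<Union>i\<in>{1..N}. A i)" using nonsing unfolding S_def by blast
    qed
    obtain i where i: "i \<in> {1..N}" "(f^^n) y \<in> A i" using DU fnyD by blast
    have Dsub: "Db \<beta> \<subseteq> A i"
    proof (rule conn_in_one[of _ X A "{1..N}"])
      show "connected (Db \<beta>)" using conn cX'[OF \<beta>] r0 unfolding Db_def by blast
      show "Db \<beta> \<subseteq> X" unfolding Db_def by blast
      show "Db \<beta> \<subseteq> (\<Union>i\<in>{1..N}. A i)" by (rule DU)
      show "\<forall>i\<in>{1..N}. openin (top_of_set X) (A i)" using A_open by blast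
      show "\<forall>i\<in>{1..N}. \<forall>j\<in>{1..N}. i \<noteq> j \<longrightarrow> A i \<inter> A j = {}" using A_disj by blast
    qed (use i fnyD in auto)
    define \<beta>' where "\<beta>' = tl \<beta> @ [i]"
    have len': "length \<beta>' = n" unfolding \<beta>'_def using len n1 by simp
    have ne: "\<beta> = hd \<beta> # tl \<beta>" using len n1 by (cases \<beta>) auto
    have hd: "hd \<beta> \<in> {1..N}" using set\<beta> ne by (metis list.set_intros(1) subsetD)
    have "set (tl \<beta>) \<subseteq> set \<beta>" by (cases \<beta>) auto
    then have set\<beta>': "set \<beta>' \<subseteq> {1..N}" unfolding \<beta>'_def using set\<beta> i(1) by auto
    have nth': "\<beta>'!j \<in> {1..N} \<and> (f^^j) (f y) \<in> A (\<beta>'!j)" if j: "j < n" for j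
    proof (cases "Suc j < n")
      case True
      then have jl: "j < length (tl \<beta>)" using len by simp
      then have "\<beta>'!j = \<beta>!(Suc j)" unfolding \<beta>'_def by (simp add: nth_append nth_tl)
      moreover have "(f^^j) (f y) = (f^^Suc j) y" by (simp add: funpow_Suc_right del: funpow.simps)
      moreover have "\<beta>!(Suc j) \<in> {1..N} \<and> (f^^Suc j) y \<in> A (\<beta>!Suc j)" using y(2) True by blast
      ultimately show ?thesis by metis
    next
      case False
      then have jn: "Suc j = n" using j by simp
      then have "j = length (tl \<beta>)" using len by simp
      then have "\<beta>'!j = i" unfolding \<beta>'_def by (simp add: nth_append)
      moreover have "(f^^j) (f y) = (f^^n) y" using jn by (metis comp_apply funpow_Suc_right)
      ultimately show ?thesis using i by simp
    qed
    have reg': "regular_order X f S n (f y)"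
      unfolding regular_order_def
    proof (intro conjI allI impI)
      show "f y \<in> X" using f_X yX by blast
      fix j assume j: "j < n"
      show "(f^^j) (f y) \<notin> S" using nth'[OF j] A_nonsing unfolding S_def by blast
    qed
    have \<beta>'I: "\<beta>' \<in> I" unfolding I_def itineraries_def
      using len' reg' nth' unfolding S_def by blast
    show ?thesis
    proof (intro bexI[OF _ \<beta>'I] conjI ballI)
      fix z assume z: "z \<in> Db \<beta>"
      have zX: "z \<in> X" using z unfolding Db_def by blast
      have fz: "f z = phi i z" using f_eq i(1) Dsub z by blast
      have "phi i (c \<beta>) = ifs_comp phi (\<beta> @ [i]) x0" unfolding c_def by (simp add: ifs_snoc)
      also have "\<dots> = ifs_comp phi \<beta>' (phi (hd \<beta>) x0)"
        unfolding \<beta>'_def by (subst ne) simp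
      finally have pc: "phi i (c \<beta>) = ifs_comp phi \<beta>' (phi (hd \<beta>) x0)" .
      have "dist (phi i (c \<beta>)) (c \<beta>') \<le> lam^n * dist (phi (hd \<beta>) x0) x0"
        using ifs_lip[OF set\<beta>' phi_X[OF hd x0] x0] len' pc unfolding c_def by simp
      also have "\<dots> \<le> lam^n * Dm" using dX[OF phi_X[OF hd x0] x0] lamn by (intro mult_left_mono) auto
      finally have d2: "dist (phi i (c \<beta>)) (c \<beta>') \<le> lam^n * Dm" .
      have "dist (phi i z) (phi i (c \<beta>)) \<le> lam * dist z (c \<beta>)" using phi_lip[OF i(1) zX cX'[OF \<beta>]] .
      also have "\<dots> \<le> lam * r" using z lam0 unfolding Db_def by (intro mult_left_mono) (auto simp: dist_commute)
      finally have d1: "dist (phi i z) (phi i (c \<beta>)) \<le> lam * r" .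
      have "dist (c \<beta>') (f z) \<le> \<rho>" unfolding fz \<rho>_def
        using dist_triangle[of "phi i z" "c \<beta>'" "phi i (c \<beta>)"] d1 d2 by (simp add: dist_commute)
      then show "f z \<in> K \<beta>'" unfolding K_def using f_X zX by simp
    next
      fix z z' assume z: "z \<in> Db \<beta>" and z': "z' \<in> Db \<beta>"
      have "f z = phi i z" "f z' = phi i z'" using f_eq i(1) Dsub z z' by blast+
      moreover have "z \<in> X" "z' \<in> X" using z z' unfolding Db_def by auto
      ultimately show "dist (f z) (f z') \<le> lam * dist z z'" using phi_lip[OF i(1)] by simp
    qed
  qed
  then obtain g where g: "\<forall>\<beta>\<in>I. g \<beta> \<in> I \<and> (\<forall>z\<in>Db \<beta>. f z \<in> K (g \<beta>)) \<and>
      (\<forall>z\<in>Db \<beta>. \<forall>z'\<in>Db \<beta>. dist (f z) (f z') \<le> lam * dist z z')"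
    by metis
  have iter: "(g^^t) \<beta> \<in> I \<and> (f^^t) z \<in> Db ((g^^t) \<beta>) \<and> (f^^t) z' \<in> Db ((g^^t) \<beta>) \<and>
      dist ((f^^t) z) ((f^^t) z') \<le> lam^t * dist z z'"
    if "\<beta> \<in> I" "z \<in> Db \<beta>" "z' \<in> Db \<beta>" for t \<beta> z z'
  proof (induction t)
    case 0 then show ?case using that by simp
  next
    case (Suc t)
    let ?b = "(g^^t) \<beta>"
    have b: "?b \<in> I" "(f^^t) z \<in> Db ?b" "(f^^t) z' \<in> Db ?b" using Suc by auto
    have "(g^^Suc t) \<beta> = g ?b" by simp
    moreover have "g ?b \<in> I" using g b by blast
    moreover have "f ((f^^t) z) \<in> Db (g ?b)" "f ((f^^t) z') \<in> Db (g ?b)" using g b KD by blast+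
    moreover have "dist (f ((f^^t) z)) (f ((f^^t) z')) \<le> lam * dist ((f^^t) z) ((f^^t) z')"
      using g b by blast
    moreover have "lam * dist ((f^^t) z) ((f^^t) z') \<le> lam * (lam^t * dist z z')"
      using Suc lam0 by (intro mult_left_mono) auto
    ultimately show ?case by simp
  qed
  have iterK: "(f^^t) z \<in> K ((g^^t) \<beta>)" if hy: "\<beta> \<in> I" "z \<in> Db \<beta>" "t \<ge> 1" for t \<beta> z
  proof -
    obtain t' where t': "t = Suc t'" using hy(3) by (cases t) auto
    have "(g^^t') \<beta> \<in> I" "(f^^t') z \<in> Db ((g^^t') \<beta>)" using iter[OF hy(1,2,2)] by auto
    then have "f ((f^^t') z) \<in> K (g ((g^^t') \<beta>))" using g by blast
    then show ?thesis using t' by simp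
  qed
  have conv: "\<exists>T. \<forall>t\<ge>T. dist ((f^^t) a) ((f^^t) b) < e"
    if hy: "\<gamma> \<in> I" "a \<in> Db \<gamma>" "b \<in> Db \<gamma>" "e > 0" for \<gamma> a b e
  proof -
    obtain T where T: "lam^T < e / (2 * r)" using real_arch_pow_inv[of "e / (2 * r)" lam] hy(4) r0 lam1
      by auto
    have dab: "dist a b < 2 * r"
      using hy(2,3) dist_triangle[of a b "c \<gamma>"] unfolding Db_def by (simp add: dist_commute)
    show ?thesis
    proof (intro exI allI impI)
      fix t assume t: "t \<ge> T"
      have "dist ((f^^t) a) ((f^^t) b) \<le> lam^t * dist a b" using iter[OF hy(1-3)] by blast
      also have "\<dots> \<le> lam^T * dist a b"
        using t lam0 lam1 by (intro mult_right_mono power_decreasing) auto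
      also have "\<dots> \<le> lam^T * (2 * r)" using dab lam0 by (intro mult_left_mono) auto
      also have "\<dots> < e / (2 * r) * (2 * r)" using T r0 by (intro mult_strict_right_mono) auto
      also have "\<dots> = e" using r0 by simp
      finally show "dist ((f^^t) a) ((f^^t) b) < e" .
    qed
  qed
  have main: "\<exists>\<gamma>\<in>I. omega_limit f x = omega_limit f (c \<gamma>) \<and> periodic_orbit X f (omega_limit f x)"
    if x: "x \<in> regular_points X f S" for x
  proof -
    have xX: "x \<in> X" and xr: "\<And>j. (f^^j) x \<notin> S"
      using x unfolding regular_points_def regular_order_def by auto
    define \<beta>0 where "\<beta>0 = map (\<lambda>j. SOME i. i\<in>{1..N} \<and> (f^^j) x \<in> A i) [0..<n]"
    have it: "\<beta>0!j \<in> {1..N} \<and> (f^^j) x \<in> A (\<beta>0!j)" if "j < n" for j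
    proof -
      have "\<exists>i. i\<in>{1..N} \<and> (f^^j) x \<in> A i"
        using nonsing[OF fpow_X[OF xX] xr[of j, unfolded S_def]] by blast
      then have h: "(SOME i. i\<in>{1..N} \<and> (f^^j) x \<in> A i) \<in> {1..N} \<and>
          (f^^j) x \<in> A (SOME i. i\<in>{1..N} \<and> (f^^j) x \<in> A i)" by (rule someI_ex)
      have eq: "\<beta>0!j = (SOME i. i\<in>{1..N} \<and> (f^^j) x \<in> A i)" unfolding \<beta>0_def using that by simp
      show ?thesis unfolding eq by (rule h)
    qed
    have len0: "length \<beta>0 = n" unfolding \<beta>0_def by simp
    have \<beta>0I: "\<beta>0 \<in> I" unfolding I_def itineraries_def
      using len0 it xX xr unfolding regular_order_def S_def by blast
    have fnx: "(f^^n) x = ifs_comp phi \<beta>0 x"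
      using itin_funpow[OF xX, of \<beta>0 n] it len0 by simp
    have "dist ((f^^n) x) (c \<beta>0) \<le> lam^n * dist x x0"
      unfolding fnx c_def using ifs_lip[OF conjunct1[OF conjunct2[OF Imem[OF \<beta>0I]]] xX x0] len0 by simp
    also have "\<dots> \<le> lam^n * Dm" using dX[OF xX x0] lamn by (intro mult_left_mono) auto
    finally have fnxD: "(f^^n) x \<in> Db \<beta>0"
      using lnD fpow_X[OF xX] unfolding Db_def by (simp add: dist_commute)
    have img: "(\<lambda>k. (g^^k) \<beta>0) ` {..card I} \<subseteq> I" using iter[OF \<beta>0I cD[OF \<beta>0I] cD[OF \<beta>0I]] by blast
    have "\<not> inj_on (\<lambda>k. (g^^k) \<beta>0) {..card I}"
    proof
      assume "inj_on (\<lambda>k. (g^^k) \<beta>0) {..card I}"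
      then have "card {..card I} \<le> card I" using card_inj_on_le img finI by blast
      then show False by simp
    qed
    then obtain k1 k2 where k12: "k1 \<noteq> k2" "(g^^k1) \<beta>0 = (g^^k2) \<beta>0"
      unfolding inj_on_def by blast
    obtain m p where mp: "p \<ge> 1" "(g^^(p + m)) \<beta>0 = (g^^m) \<beta>0"
    proof (cases "k1 < k2")
      case True
      then show ?thesis using that[of "k2 - k1" k1] k12 by simp
    next
      case False
      then show ?thesis using that[of "k1 - k2" k2] k12 by simp
    qed
    define \<gamma> where "\<gamma> = (g^^m) \<beta>0"
    have \<gamma>I: "\<gamma> \<in> I" unfolding \<gamma>_def using iter[OF \<beta>0I fnxD fnxD] by blast
    have g\<gamma>: "(g^^p) \<gamma> = \<gamma>" unfolding \<gamma>_def using mp(2) by (simp add: funpow_add)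
    define w where "w = (f^^(n+m)) x"
    have wD: "w \<in> Db \<gamma>" unfolding w_def \<gamma>_def using iter[OF \<beta>0I fnxD fnxD, of m]
      by (simp add: funpow_add add.commute[of n m])
    have Kc: "complete (K \<gamma>)"
    proof -
      have "compact (X \<inter> cball (c \<gamma>) \<rho>)" using cX by (intro compact_Int_closed) auto
      then show ?thesis unfolding K_def by (simp add: Int_commute compact_imp_complete)
    qed
    have Kne: "K \<gamma> \<noteq> {}" using iterK[OF \<gamma>I cD[OF \<gamma>I] mp(1)] g\<gamma> by auto
    have Kmap: "(f^^p) ` K \<gamma> \<subseteq> K \<gamma>" using iterK[OF \<gamma>I _ mp(1)] KD g\<gamma> by fastforce
    have lp: "lam^p < 1" using lam0 lam1 mp(1) by (simp add: power_less_one_iff)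
    have Klip: "dist ((f^^p) u) ((f^^p) v) \<le> lam^p * dist u v" if "u \<in> K \<gamma>" "v \<in> K \<gamma>" for u v
      using iter[OF \<gamma>I, of u v p] that KD by blast
    obtain q where q: "q \<in> K \<gamma>" "(f^^p) q = q"
      using Banach_fix[OF Kc Kne _ lp Kmap Klip] lam0 by auto
    have qD: "q \<in> Db \<gamma>" using q KD by blast
    have qX: "q \<in> X" using q unfolding K_def by blast
    have om_q: "omega_limit f q = {(f ^^ k) q | k. True}" using omega_periodic[OF q(2) mp(1)] .
    have per: "periodic_orbit X f (omega_limit f q)"
      unfolding periodic_orbit_def om_q using qX q(2) mp(1) by blast
    have e1: "omega_limit f x = omega_limit f q"
    proof (rule omega_asym[where k = "n + m"])
      fix e :: real assume "e > 0"
      then obtain T where "\<forall>t\<ge>T. dist ((f^^t) w) ((f^^t) q) < e" using conv[OF \<gamma>I wD qD] by blast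
      moreover have "(f^^(t + (n+m))) x = (f^^t) w" for t unfolding w_def by (simp add: funpow_add)
      ultimately show "\<exists>T. \<forall>t\<ge>T. dist ((f ^^ (t + (n + m))) x) ((f ^^ t) q) < e" by auto
    qed
    have e2: "omega_limit f (c \<gamma>) = omega_limit f q"
    proof (rule omega_asym[where k = 0])
      fix e :: real assume "e > 0"
      then show "\<exists>T. \<forall>t\<ge>T. dist ((f ^^ (t + 0)) (c \<gamma>)) ((f ^^ t) q) < e"
        using conv[OF \<gamma>I cD[OF \<gamma>I] qD] by simp
    qed
    show ?thesis using \<gamma>I e1 e2 per by auto
  qed
  show ?thesis unfolding asymptotically_periodic_def
  proof (intro exI conjI)
    let ?F = "(\<lambda>x. omega_limit f x) ` regular_points X f (singular_set X N A)"
    have "?F \<subseteq> (\<lambda>\<gamma>. omega_limit f (c \<gamma>)) ` I" using main unfolding S_def by blast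
    then show "finite ?F" using finI finite_surj by blast
    show "\<forall>P\<in>?F. periodic_orbit X f P" using main unfolding S_def by blast
    show "(\<Union>x\<in>regular_points X f (singular_set X N A). omega_limit f x) = \<Union> ?F" by simp
  qed
qed
end


theorem theorem2p9:
  fixes X :: "'a::metric_space set" and lam :: real and N :: nat
    and U :: "'m::euclidean_space set" and \<mu>s :: 'm
    and f :: "'m \<Rightarrow> 'a \<Rightarrow> 'a" and A :: "'m \<Rightarrow> nat \<Rightarrow> 'a set" and phi :: "'m \<Rightarrow> nat \<Rightarrow> 'a \<Rightarrow> 'a"
  assumes "compact X"
    and "\<forall>x\<in>X. \<forall>r>0. connected (ball x r \<inter> X)"
    and "0 < lam" and "lam < 1"
    and "U \<in> sets lebesgue" and "emeasure lebesgue U > 0"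
    and "\<forall>\<mu>\<in>U. pw_contraction X lam N (f \<mu>) (A \<mu>) (phi \<mu>)"
    and "\<mu>s \<in> U"
    and "hypothesis_E X N U f A \<mu>s"
    and "hypothesis_T X N U f A phi \<mu>s"
  shows "\<exists>\<delta>>0. AE \<mu> in lebesgue. \<mu> \<in> U \<inter> ball \<mu>s \<delta> \<longrightarrow>
           asymptotically_periodic X (f \<mu>)
             (regular_points X (f \<mu>) (singular_set X N (A \<mu>)))"
proof -
  note cX = assms(1) and conn = assms(2) and lam0 = assms(3) and lam1 = assms(4)
  obtain x0 \<epsilon>0 \<delta>0 n0 a c where x0: "x0 \<in> X" and pos: "\<epsilon>0 > 0" "\<delta>0 > 0" "n0 \<ge> 1" "a > 0" "c > 0"
    and HT: "\<forall>\<epsilon>. 0 < \<epsilon> \<and> \<epsilon> < \<epsilon>0 \<longrightarrow> (\<forall>n\<ge>n0. \<forall>\<alpha>\<in>J_set X N U f A \<mu>s \<delta>0 n.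
          outer_measure_of lebesgue
            {\<mu> \<in> U \<inter> ball \<mu>s \<delta>0. singular_set X N (A \<mu>) \<noteq> {} \<and>
                 infdist (ifs_comp (phi \<mu>) \<alpha> x0) (singular_set X N (A \<mu>)) \<le> \<epsilon>}
          \<le> ennreal (c * \<epsilon> powr a))"
    using assms(10) unfolding hypothesis_T_def by (elim bexE exE conjE) blast
  define r where "r n = 2 * lam^n * (diameter X + 1) / (1 - lam)" for n :: nat
  define \<kappa> where "\<kappa> = 2 * (diameter X + 1) / (1 - lam)"
  have bX: "bounded X" using cX compact_imp_bounded by auto
  have Dm0: "diameter X \<ge> 0" using diameter_bounded_bound[OF bX x0 x0] by simp
  have \<kappa>0: "\<kappa> > 0" unfolding \<kappa>_def using Dm0 lam1 by auto
  have r\<kappa>: "r n = \<kappa> * lam^n" for n unfolding r_def \<kappa>_def by simp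
  have rpos: "r n > 0" for n unfolding r\<kappa> using \<kappa>0 lam0 by simp
  have lnl: "ln lam < 0" using lam0 lam1 by (rule ln_less_zero)
  define \<eta> where "\<eta> = - (a * ln lam) / 2"
  have \<eta>0: "\<eta> > 0" unfolding \<eta>_def using pos(4) lnl by (simp add: mult_pos_neg)
  have "\<forall>\<^sub>F \<delta> in at_right 0. limsup (\<lambda>n. log_growth (card (J_set X N U f A \<mu>s \<delta> n)) n) < ereal \<eta>"
    using assms(9) unfolding hypothesis_E_def by (rule order_tendstoD(2)) (simp add: \<eta>0)
  then obtain b where b: "b > 0" "\<And>y. 0 < y \<Longrightarrow> y < b \<Longrightarrow>
      limsup (\<lambda>n. log_growth (card (J_set X N U f A \<mu>s y n)) n) < ereal \<eta>"
    unfolding eventually_at_right_field by auto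
  define \<delta> where "\<delta> = min \<delta>0 (b/2)"
  have \<delta>0': "\<delta> > 0" "\<delta> \<le> \<delta>0" "\<delta> < b" unfolding \<delta>_def using pos b by auto
  define J where "J n = J_set X N U f A \<mu>s \<delta> n" for n
  have "\<forall>\<^sub>F n in sequentially. log_growth (card (J n)) n < ereal \<eta>"
    unfolding J_def using b(2)[OF \<delta>0'(1,3)] by (rule Limsup_lessD)
  then obtain n1 where n1: "\<And>n. n \<ge> n1 \<Longrightarrow> log_growth (card (J n)) n < ereal \<eta>"
    unfolding eventually_sequentially by blast
  have cardb: "real (card (J n)) \<le> exp \<eta> ^ n" if "n \<ge> n1" "n \<ge> 1" for n
  proof (cases "card (J n) = 0")
    case True then show ?thesis by simp
  next
    case False
    then have "ln (real (card (J n))) / real n < \<eta>" using n1[OF that(1)] unfolding log_growth_def by simp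
    then have "ln (real (card (J n))) < \<eta> * real n" using that(2) by (simp add: divide_less_eq)
    then have "exp (ln (real (card (J n)))) < exp (\<eta> * real n)" by simp
    then show ?thesis using False by (simp add: exp_of_nat_mult[symmetric] mult.commute)
  qed
  have "r \<longlonglongrightarrow> 0" unfolding r\<kappa> using lam0 lam1
    by (intro tendsto_mult_right_zero LIMSEQ_power_zero) auto
  then have "\<forall>\<^sub>F n in sequentially. r n < \<epsilon>0" using pos(1) by (rule order_tendstoD(2))
  then obtain n2 where n2: "\<And>n. n \<ge> n2 \<Longrightarrow> r n < \<epsilon>0" unfolding eventually_sequentially by blast
  define nst where "nst = max (max n0 n1) (max n2 1)"
  define E where "E n \<beta> = {\<mu> \<in> U \<inter> ball \<mu>s \<delta>0. singular_set X N (A \<mu>) \<noteq> {} \<and>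
                 infdist (ifs_comp (phi \<mu>) \<beta> x0) (singular_set X N (A \<mu>)) \<le> r n}" for n \<beta>
  have "\<forall>n \<beta>. \<exists>T\<in>sets lebesgue. E n \<beta> \<subseteq> T \<and> outer_measure_of lebesgue (E n \<beta>) = emeasure lebesgue T"
    by (intro allI outer_measure_of_attain) simp
  then obtain T where T: "\<And>n \<beta>. T n \<beta> \<in> sets lebesgue" "\<And>n \<beta>. E n \<beta> \<subseteq> T n \<beta>"
      "\<And>n \<beta>. outer_measure_of lebesgue (E n \<beta>) = emeasure lebesgue (T n \<beta>)"
    by metis
  define G where "G n = (\<Union>\<beta>\<in>J n. T n \<beta>)" for n
  have finJ: "finite (J n)" for n
  proof -
    have "J n \<subseteq> {xs. set xs \<subseteq> {1..N} \<and> length xs = n}"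
      unfolding J_def J_set_def itineraries_def by (auto simp: set_conv_nth)
    then show ?thesis by (rule finite_subset) (rule finite_lists_length_eq, simp)
  qed
  have Gm: "G n \<in> sets lebesgue" for n unfolding G_def using finJ T(1) by (intro sets.finite_UN) auto
  have JJ: "J n \<subseteq> J_set X N U f A \<mu>s \<delta>0 n" for n
    unfolding J_def J_set_def using \<delta>0'(2) by auto
  define q where "q = exp \<eta> * exp (a * ln lam)"
  have q01: "0 < q" "q < 1"
  proof -
    show "0 < q" unfolding q_def by simp
    have "q = exp (\<eta> + a * ln lam)" unfolding q_def by (simp add: exp_add)
    moreover have "\<eta> + a * ln lam < 0" unfolding \<eta>_def using pos(4) lnl by (simp add: mult_pos_neg)
    ultimately show "q < 1" by simp
  qed
  have rpow: "r n powr a = \<kappa> powr a * exp (a * ln lam) ^ n" for n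
  proof -
    have "r n powr a = \<kappa> powr a * (lam^n) powr a" unfolding r\<kappa> using \<kappa>0 lam0 by (simp add: powr_mult)
    also have "(lam^n) powr a = exp (a * ln (lam^n))" using lam0 by (simp add: powr_def)
    also have "\<dots> = exp (real n * (a * ln lam))" using lam0 by (simp add: ln_realpow mult_ac)
    also have "\<dots> = exp (a * ln lam) ^ n" by (rule exp_of_nat_mult)
    finally show ?thesis .
  qed
  have Gb: "emeasure lebesgue (G n) \<le> ennreal (c * \<kappa> powr a * q ^ n)" if n: "n \<ge> nst" for n
  proof -
    have "emeasure lebesgue (G n) \<le> (\<Sum>\<beta>\<in>J n. emeasure lebesgue (T n \<beta>))"
      unfolding G_def using finJ T(1) by (intro emeasure_subadditive_finite) auto
    also have "\<dots> \<le> (\<Sum>\<beta>\<in>J n. ennreal (c * r n powr a))"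
    proof (rule sum_mono)
      fix \<beta> assume "\<beta> \<in> J n"
      then have "\<beta> \<in> J_set X N U f A \<mu>s \<delta>0 n" using JJ by blast
      moreover have "r n < \<epsilon>0" "n \<ge> n0" using n2 n nst_def by auto
      ultimately have "outer_measure_of lebesgue (E n \<beta>) \<le> ennreal (c * r n powr a)"
        unfolding E_def using HT[rule_format, of "r n" n \<beta>] rpos[of n] by blast
      then show "emeasure lebesgue (T n \<beta>) \<le> ennreal (c * r n powr a)" using T(3) by simp
    qed
    also have "\<dots> = ennreal (real (card (J n)) * (c * r n powr a))"
      using pos(5) by (simp add: ennreal_mult ennreal_of_nat_eq_real_of_nat)
    also have "\<dots> \<le> ennreal (c * \<kappa> powr a * q ^ n)"
    proof (rule ennreal_leI)
      have "real (card (J n)) * (c * r n powr a) \<le> exp \<eta> ^ n * (c * r n powr a)"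
        using cardb[of n] n nst_def pos(5) by (intro mult_right_mono) auto
      also have "\<dots> = c * \<kappa> powr a * q ^ n" unfolding rpow q_def by (simp add: power_mult_distrib mult_ac)
      finally show "real (card (J n)) * (c * r n powr a) \<le> c * \<kappa> powr a * q ^ n" .
    qed
    finally show ?thesis .
  qed
  define Nset where "Nset = (\<Inter>k. G (k + nst))"
  have Nm: "Nset \<in> sets lebesgue" unfolding Nset_def using Gm by (intro sets.countable_INT) auto
  have Nle: "emeasure lebesgue Nset \<le> ennreal (c * \<kappa> powr a * q ^ (k + nst))" for k
  proof -
    have "emeasure lebesgue Nset \<le> emeasure lebesgue (G (k + nst))"
      unfolding Nset_def using Gm by (intro emeasure_mono) auto
    also have "\<dots> \<le> ennreal (c * \<kappa> powr a * q ^ (k + nst))" by (intro Gb) simp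
    finally show ?thesis .
  qed
  have lim: "(\<lambda>k. ennreal (c * \<kappa> powr a * q ^ (k + nst))) \<longlonglongrightarrow> ennreal 0"
  proof (rule tendsto_ennrealI)
    have "(\<lambda>k. q ^ k) \<longlonglongrightarrow> 0" using q01 by (intro LIMSEQ_power_zero) auto
    then have "(\<lambda>k. q ^ (k + nst)) \<longlonglongrightarrow> 0" by (rule LIMSEQ_ignore_initial_segment[where k = nst, simplified])
    then show "(\<lambda>k. c * \<kappa> powr a * q ^ (k + nst)) \<longlonglongrightarrow> 0" by (rule tendsto_mult_right_zero)
  qed
  have "emeasure lebesgue Nset \<le> ennreal 0" using lim by (rule LIMSEQ_le_const) (use Nle in auto)
  then have Nnull: "Nset \<in> null_sets lebesgue" using Nm by (intro null_setsI) simp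
  show ?thesis
  proof (intro exI conjI)
    show "\<delta> > 0" by (rule \<delta>0'(1))
    show "AE \<mu> in lebesgue. \<mu> \<in> U \<inter> ball \<mu>s \<delta> \<longrightarrow>
           asymptotically_periodic X (f \<mu>) (regular_points X (f \<mu>) (singular_set X N (A \<mu>)))"
    proof (rule AE_I'[OF Nnull], rule subsetI)
      fix \<mu> assume "\<mu> \<in> {\<mu> \<in> space lebesgue. \<not> (\<mu> \<in> U \<inter> ball \<mu>s \<delta> \<longrightarrow>
           asymptotically_periodic X (f \<mu>) (regular_points X (f \<mu>) (singular_set X N (A \<mu>))))}"
      then have \<mu>: "\<mu> \<in> U" "\<mu> \<in> ball \<mu>s \<delta>"
        and nap: "\<not> asymptotically_periodic X (f \<mu>) (regular_points X (f \<mu>) (singular_set X N (A \<mu>)))"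
        by auto
      have pw: "pw_contraction X lam N (f \<mu>) (A \<mu>) (phi \<mu>)" using assms(7) \<mu>(1) by blast
      show "\<mu> \<in> Nset" unfolding Nset_def
      proof
        fix k :: nat
        define n where "n = k + nst"
        have n1': "n \<ge> 1" unfolding n_def nst_def by simp
        obtain \<beta> where \<beta>: "\<beta> \<in> itineraries X N (f \<mu>) (A \<mu>) n"
          and bad: "singular_set X N (A \<mu>) \<noteq> {}"
            "infdist (ifs_comp (phi \<mu>) \<beta> x0) (singular_set X N (A \<mu>)) \<le> r n"
        proof -
          have "\<not> (\<forall>\<beta>\<in>itineraries X N (f \<mu>) (A \<mu>) n. singular_set X N (A \<mu>) = {} \<or>
              infdist (ifs_comp (phi \<mu>) \<beta> x0) (singular_set X N (A \<mu>)) > 2 * lam^n * (diameter X + 1) / (1 - lam))"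
            by (rule contrapos_nn[OF nap det[OF pw lam0 cX conn lam1 x0 n1']])
          then obtain \<beta> where h\<beta>: "\<beta> \<in> itineraries X N (f \<mu>) (A \<mu>) n" and
            hn: "\<not> (singular_set X N (A \<mu>) = {} \<or>
              infdist (ifs_comp (phi \<mu>) \<beta> x0) (singular_set X N (A \<mu>)) > 2 * lam^n * (diameter X + 1) / (1 - lam))"
            by blast
          show ?thesis by (rule that[OF h\<beta>]) (use hn in \<open>auto simp: r_def not_less\<close>)
        qed
        have "\<beta> \<in> J n" unfolding J_def J_set_def using \<beta> \<mu> by blast
        moreover have "\<mu> \<in> E n \<beta>" unfolding E_def using \<mu> \<delta>0'(2) bad by auto
        ultimately show "\<mu> \<in> G (k + nst)" unfolding G_def n_def using T(2) by blast
      qed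
    qed
  qed
qed

end
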